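(* For all real $a$ and $y$, $$\int_0^{\infty}K_0(t)\,\operatorname{bei}\!\left(a\sqrt{(1+y^2)t}\right)\sin(yt)\,dt=\frac{\pi}{2}(1+y^2)^{-1/2}J_0\!\left(\frac{a^2}{4}\right)\sinh\!\left(\frac{a^2y}{4}\right).$$
   Context: $K_0$ is the Macdonald function of order $0$ and $J_0$ the Bessel function of order $0$. The Kelvin function $\operatorname{bei}$ is $\operatorname{bei}(x)=\sum_{k\ge0}\frac{(-1)^k (x/2)^{4k+2}}{((2k+1)!)^2}$. *)

theory Defs
  imports "HOL-Analysis.Analysis"
begin

definition besselJ0 :: "real \<Rightarrow> real" where
  "besselJ0 x = (\<Sum>k. (-1) ^ k * (x / 2) ^ (2 * k) / (fact k) ^ 2)"

definition kelvin_bei :: "real \<Rightarrow> real" where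
  "kelvin_bei x = (\<Sum>k. (-1) ^ k * (x / 2) ^ (4 * k + 2) / (fact (2 * k + 1)) ^ 2)"

definition besselK0 :: "real \<Rightarrow> real" where
  "besselK0 x = (LBINT s:{0..}. exp (- x * cosh s))"

end

theory Submission
  imports Defs "HOL-Probability.Sinc_Integral"
begin


lemma meas_cosh[measurable]: "(cosh :: real \<Rightarrow> real) \<in> borel_measurable borel"
  by (intro borel_measurable_continuous_onI continuous_intros)

lemma meas_K0[measurable]: "besselK0 \<in> borel_measurable borel"
  unfolding besselK0_def set_lebesgue_integral_def by measurable

lemma nn_pow_exp0: "(\<integral>\<^sup>+x. ennreal (x^n * exp (-x) * indicator {0<..} x) \<partial>lborel) = ennreal (fact n)"
  using has_bochner_integral_I0i_power_exp_m[of n]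
  by (subst nn_integral_eq_integral) (auto simp: has_bochner_integral_iff split: split_indicator)

lemma nn_pow_exp:
  assumes p: "p > 0"
  shows "(\<integral>\<^sup>+t. ennreal (t^n * exp (-(t*p)) * indicator {0<..} t) \<partial>lborel) = ennreal (fact n / p^(Suc n))"
proof -
  have "(\<integral>\<^sup>+t. ennreal (t^n * exp (-(t*p)) * indicator {0<..} t) \<partial>lborel)
     = \<bar>1/p\<bar> * (\<integral>\<^sup>+x. ennreal ((0 + 1/p*x)^n * exp (-((0 + 1/p*x)*p)) * indicator {0<..} (0 + 1/p*x)) \<partial>lborel)"
    by (rule nn_integral_real_affine) (use p in auto)
  also have "(\<lambda>x. ennreal ((0 + 1/p*x)^n * exp (-((0 + 1/p*x)*p)) * indicator {0<..} (0 + 1/p*x)))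
     = (\<lambda>x. ennreal ((1/p)^n) * ennreal (x^n * exp (-x) * indicator {0<..} x))"
    using p by (auto simp: fun_eq_iff power_divide zero_less_divide_iff ennreal_mult'[symmetric] split: split_indicator)
  also have "(\<integral>\<^sup>+x. ennreal ((1/p)^n) * ennreal (x^n * exp (-x) * indicator {0<..} x) \<partial>lborel) = ennreal ((1/p)^n) * ennreal (fact n)"
    by (subst nn_integral_cmult) (auto simp: nn_pow_exp0)
  finally show ?thesis using p
    by (simp add: ennreal_mult'[symmetric] field_simps ennreal_mult''[symmetric])
qed

lemma cosh_ge_half: "s/2 \<le> cosh (s::real)"
proof -
  have "exp s \<ge> 1 + s" by (rule exp_ge_add_one_self)
  moreover have "exp (-s) > 0" by simp
  ultimately have "s \<le> exp s + exp (-s)" by linarith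
  then show ?thesis by (simp add: cosh_def)
qed

lemma cosh_ge_exp: "exp s / 2 \<le> cosh (s::real)"
proof -
  have "exp (-s) > 0" by simp
  then show ?thesis by (simp add: cosh_def)
qed

lemma K0_int: "(t::real) > 0 \<Longrightarrow> set_integrable lborel {0<..} (\<lambda>s. exp (-t*cosh s))"
proof (rule set_integrable_bound[OF integrable_I0i_exp_mscale[of "t/2"]])
  assume t: "t > 0"
  show "0 < t/2" using t by simp
  show "set_borel_measurable lborel {0<..} (\<lambda>s. exp (- t * cosh s))"
    unfolding set_borel_measurable_def by measurable
  show "AE x in lborel. x \<in> {0<..} \<longrightarrow> norm (exp (- t * cosh x)) \<le> norm (exp (- (x * (t / 2))))"
  proof (intro AE_I2 impI)
    fix x :: real
    have "t * (x/2) \<le> t * cosh x" using t cosh_ge_half[of x] by (intro mult_left_mono) auto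
    then show "norm (exp (- t * cosh x)) \<le> norm (exp (- (x * (t / 2))))" by (simp add: mult.commute)
  qed
qed

lemma K0_alt: "besselK0 t = (LBINT s:{0<..}. exp (-t*cosh s))"
  unfolding besselK0_def
  by (rule set_integral_cong_set) (auto simp: set_borel_measurable_def intro!: AE_I[where N="{0}"])

lemma K0_nonneg: "0 \<le> besselK0 t"
  unfolding besselK0_def set_lebesgue_integral_def
  by (rule integral_nonneg_AE) auto

lemma K0_nn: "t > 0 \<Longrightarrow> ennreal (besselK0 t) = (\<integral>\<^sup>+s. ennreal (exp (-t*cosh s)) * indicator {0<..} s \<partial>lborel)"
  unfolding K0_alt set_lebesgue_integral_def
  by (subst nn_integral_eq_integral[symmetric])
     (auto dest: K0_int simp: set_integrable_def indicator_mult_ennreal mult.commute intro!: nn_integral_cong)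

lemma K0_tonelli:
  fixes \<phi> :: "real \<Rightarrow> ennreal"
  assumes [measurable]: "\<phi> \<in> borel_measurable borel"
  shows "(\<integral>\<^sup>+t. ennreal (besselK0 t) * \<phi> t * indicator {0<..} t \<partial>lborel)
       = (\<integral>\<^sup>+s. (\<integral>\<^sup>+t. ennreal (exp (-t*cosh s)) * \<phi> t * indicator {0<..} t \<partial>lborel) * indicator {0<..} s \<partial>lborel)"
proof -
  have "(\<integral>\<^sup>+t. ennreal (besselK0 t) * \<phi> t * indicator {0<..} t \<partial>lborel)
      = (\<integral>\<^sup>+t. (\<integral>\<^sup>+s. ennreal (exp (-t*cosh s)) * \<phi> t * indicator {0<..} t * indicator {0<..} s \<partial>lborel) \<partial>lborel)"
  proof (intro nn_integral_cong)
    fix t :: real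
    show "ennreal (besselK0 t) * \<phi> t * indicator {0<..} t
       = (\<integral>\<^sup>+s. ennreal (exp (-t*cosh s)) * \<phi> t * indicator {0<..} t * indicator {0<..} s \<partial>lborel)"
    proof (cases "t > 0")
      case True
      then have "ennreal (besselK0 t) * \<phi> t * indicator {0<..} t
          = (\<integral>\<^sup>+s. ennreal (exp (-t*cosh s)) * indicator {0<..} s \<partial>lborel) * (\<phi> t * indicator {0<..} t)"
        by (simp add: K0_nn mult_ac)
      also have "\<dots> = (\<integral>\<^sup>+s. ennreal (exp (-t*cosh s)) * indicator {0<..} s * (\<phi> t * indicator {0<..} t) \<partial>lborel)"
        by (rule nn_integral_multc[symmetric]) measurable
      finally show ?thesis by (simp add: mult_ac)
    qed simp
  qed
  also have "\<dots> = (\<integral>\<^sup>+s. (\<integral>\<^sup>+t. ennreal (exp (-t*cosh s)) * \<phi> t * indicator {0<..} t * indicator {0<..} s \<partial>lborel) \<partial>lborel)"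
    by (rule lborel_pair.Fubini'[symmetric]) measurable
  also have "\<dots> = (\<integral>\<^sup>+s. (\<integral>\<^sup>+t. ennreal (exp (-t*cosh s)) * \<phi> t * indicator {0<..} t \<partial>lborel) * indicator {0<..} s \<partial>lborel)"
    by (intro nn_integral_cong) (simp add: nn_integral_multc)
  finally show ?thesis .
qed

lemma nn_exp_cosh: "(\<integral>\<^sup>+t. ennreal (exp (-t*cosh s)) * indicator {0<..} t \<partial>lborel) = ennreal (1 / cosh s)"
  using nn_pow_exp[of "cosh s" 0]
  by (simp add: mult.commute indicator_mult_ennreal ennreal_mult'[symmetric] cong: nn_integral_cong)

lemma nn_inv_cosh_le: "(\<integral>\<^sup>+s. ennreal (1 / cosh s) * indicator {0<..} s \<partial>lborel) \<le> 2"
proof -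
  have "(\<integral>\<^sup>+s. ennreal (1 / cosh s) * indicator {0<..} s \<partial>lborel)
      \<le> (\<integral>\<^sup>+s. ennreal 2 * ennreal (s^0 * exp (-(s*1)) * indicator {0<..} s) \<partial>lborel)"
  proof (intro nn_integral_mono)
    fix s :: real
    have "1 / cosh s \<le> 2 * exp (-s)"
      using cosh_ge_exp[of s] by (simp add: exp_minus field_simps)
    then have "ennreal (1 / cosh s) \<le> ennreal (2 * exp (-s))" by (rule ennreal_leI)
    also have "ennreal (2 * exp (-s)) = ennreal 2 * ennreal (exp (-s))" by (rule ennreal_mult') simp
    finally show "ennreal (1 / cosh s) * indicator {0<..} s \<le> ennreal 2 * ennreal (s^0 * exp (-(s*1)) * indicator {0<..} s)"
      by (auto split: split_indicator)
  qed
  also have "\<dots> = 2"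
    by (subst nn_integral_cmult) (auto simp: nn_pow_exp[of 1 0, simplified])
  finally show ?thesis .
qed

lemma K0_moment_nn: "(\<integral>\<^sup>+t. ennreal (besselK0 t) * ennreal (t^n) * indicator {0<..} t \<partial>lborel) \<le> ennreal (2 * fact n)"
proof -
  have "(\<integral>\<^sup>+t. ennreal (besselK0 t) * ennreal (t^n) * indicator {0<..} t \<partial>lborel)
     = (\<integral>\<^sup>+s. (\<integral>\<^sup>+t. ennreal (exp (-t*cosh s)) * ennreal (t^n) * indicator {0<..} t \<partial>lborel) * indicator {0<..} s \<partial>lborel)"
    by (rule K0_tonelli) measurable
  also have "\<dots> = (\<integral>\<^sup>+s. ennreal (fact n / cosh s ^ Suc n) * indicator {0<..} s \<partial>lborel)"
  proof (intro nn_integral_cong)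
    fix s :: real
    have "(\<integral>\<^sup>+t. ennreal (exp (-t*cosh s)) * ennreal (t^n) * indicator {0<..} t \<partial>lborel)
        = (\<integral>\<^sup>+t. ennreal (t^n * exp (-(t*cosh s)) * indicator {0<..} t) \<partial>lborel)"
      by (intro nn_integral_cong) (auto simp: ennreal_mult'[symmetric] mult_ac split: split_indicator)
    also have "\<dots> = ennreal (fact n / cosh s ^ Suc n)" by (rule nn_pow_exp) simp
    finally show "(\<integral>\<^sup>+t. ennreal (exp (-t*cosh s)) * ennreal (t^n) * indicator {0<..} t \<partial>lborel) * indicator {0<..} s
        = ennreal (fact n / cosh s ^ Suc n) * indicator {0<..} s" by simp
  qed
  also have "\<dots> \<le> (\<integral>\<^sup>+s. ennreal (fact n) * (ennreal (1 / cosh s) * indicator {0<..} s) \<partial>lborel)"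
  proof (intro nn_integral_mono)
    fix s :: real
    have c1: "1 \<le> cosh s" by (rule cosh_real_ge_1)
    have "cosh s ^ 1 \<le> cosh s ^ Suc n" using c1 by (intro power_increasing) auto
    then have "fact n / cosh s ^ Suc n \<le> fact n * (1 / cosh s)"
      using c1 by (simp add: divide_simps)
    then show "ennreal (fact n / cosh s ^ Suc n) * indicator {0<..} s \<le> ennreal (fact n) * (ennreal (1 / cosh s) * indicator {0<..} s)"
      by (auto simp: ennreal_mult'[symmetric] split: split_indicator intro!: ennreal_leI)
  qed
  also have "\<dots> = ennreal (fact n) * (\<integral>\<^sup>+s. ennreal (1 / cosh s) * indicator {0<..} s \<partial>lborel)"
    by (rule nn_integral_cmult) measurable
  also have "\<dots> \<le> ennreal (fact n) * 2"
    by (intro mult_left_mono nn_inv_cosh_le) auto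
  also have "\<dots> = ennreal (2 * fact n)" by (simp add: ennreal_mult mult.commute)
  finally show ?thesis .
qed

lemma K0_g_nn:
  fixes g :: "real \<Rightarrow> real"
  assumes [measurable]: "g \<in> borel_measurable borel" and c: "c \<ge> 0"
    and bnd: "\<And>t. t > 0 \<Longrightarrow> \<bar>g t\<bar> \<le> c * t^n"
  shows "(\<integral>\<^sup>+t. ennreal (norm (indicator {0<..} t *\<^sub>R (besselK0 t * g t))) \<partial>lborel) \<le> ennreal (2 * c * fact n)"
proof -
  have "(\<integral>\<^sup>+t. ennreal (norm (indicator {0<..} t *\<^sub>R (besselK0 t * g t))) \<partial>lborel)
      \<le> (\<integral>\<^sup>+t. ennreal c * (ennreal (besselK0 t) * ennreal (t^n) * indicator {0<..} t) \<partial>lborel)"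
  proof (intro nn_integral_mono)
    fix t :: real
    show "ennreal (norm (indicator {0<..} t *\<^sub>R (besselK0 t * g t))) \<le> ennreal c * (ennreal (besselK0 t) * ennreal (t^n) * indicator {0<..} t)"
    proof (cases "t > 0")
      case True
      have "norm (indicator {0<..} t *\<^sub>R (besselK0 t * g t)) = besselK0 t * \<bar>g t\<bar>"
        using True K0_nonneg[of t] by (simp add: abs_mult)
      also have "\<dots> \<le> besselK0 t * (c * t^n)"
        using bnd[OF True] K0_nonneg[of t] by (intro mult_left_mono) auto
      finally have "ennreal (norm (indicator {0<..} t *\<^sub>R (besselK0 t * g t))) \<le> ennreal (c * (besselK0 t * t^n))"
        by (intro ennreal_leI) (simp add: mult_ac)
      also have "\<dots> = ennreal c * (ennreal (besselK0 t) * ennreal (t^n) * indicator {0<..} t)"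
        using True c K0_nonneg[of t] by (simp add: ennreal_mult)
      finally show ?thesis .
    qed simp
  qed
  also have "\<dots> = ennreal c * (\<integral>\<^sup>+t. ennreal (besselK0 t) * ennreal (t^n) * indicator {0<..} t \<partial>lborel)"
    by (rule nn_integral_cmult) measurable
  also have "\<dots> \<le> ennreal c * ennreal (2 * fact n)"
    by (intro mult_left_mono K0_moment_nn) auto
  also have "\<dots> = ennreal (2 * c * fact n)" using c by (simp add: ennreal_mult mult_ac)
  finally show ?thesis .
qed

lemma K0_g_integrable:
  fixes g :: "real \<Rightarrow> real"
  assumes [measurable]: "g \<in> borel_measurable borel" and c: "c \<ge> 0"
    and bnd: "\<And>t. t > 0 \<Longrightarrow> \<bar>g t\<bar> \<le> c * t^n"
  shows "set_integrable lborel {0<..} (\<lambda>t. besselK0 t * g t)"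
  unfolding set_integrable_def
proof (rule integrableI_bounded)
  show "(\<lambda>t. indicator {0<..} t *\<^sub>R (besselK0 t * g t)) \<in> borel_measurable lborel" by measurable
  have "(\<integral>\<^sup>+t. ennreal (norm (indicator {0<..} t *\<^sub>R (besselK0 t * g t))) \<partial>lborel) \<le> ennreal (2 * c * fact n)"
    by (rule K0_g_nn[OF assms])
  also have "\<dots> < \<infinity>" by simp
  finally show "(\<integral>\<^sup>+t. ennreal (norm (indicator {0<..} t *\<^sub>R (besselK0 t * g t))) \<partial>lborel) < \<infinity>" .
qed

lemma K0_g_norm_le:
  fixes g :: "real \<Rightarrow> real"
  assumes [measurable]: "g \<in> borel_measurable borel" and c: "c \<ge> 0"
    and bnd: "\<And>t. t > 0 \<Longrightarrow> \<bar>g t\<bar> \<le> c * t^n"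
  shows "(\<integral>t. norm (indicator {0<..} t *\<^sub>R (besselK0 t * g t)) \<partial>lborel) \<le> 2 * c * fact n"
proof -
  have int: "integrable lborel (\<lambda>t. norm (indicator {0<..} t *\<^sub>R (besselK0 t * g t)))"
    using K0_g_integrable[OF assms] unfolding set_integrable_def by (rule integrable_norm)
  have "ennreal (\<integral>t. norm (indicator {0<..} t *\<^sub>R (besselK0 t * g t)) \<partial>lborel)
      = (\<integral>\<^sup>+t. ennreal (norm (indicator {0<..} t *\<^sub>R (besselK0 t * g t))) \<partial>lborel)"
    by (rule nn_integral_eq_integral[OF int, symmetric]) simp
  also have "\<dots> \<le> ennreal (2 * c * fact n)" by (rule K0_g_nn[OF assms])
  finally show ?thesis using c by (subst (asm) ennreal_le_iff) auto
qed

lemma K0_fubini: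
  fixes g :: "real \<Rightarrow> real"
  assumes [measurable]: "g \<in> borel_measurable borel" and B: "\<And>t. \<bar>g t\<bar> \<le> B"
  shows "(LBINT t:{0<..}. besselK0 t * g t) = (LBINT s:{0<..}. (LBINT t:{0<..}. exp (-t*cosh s) * g t))"
proof -
  define F where "F s t = indicator {0<..} s * indicator {0<..} t * exp (-t*cosh s) * g t" for s t :: real
  have Fm[measurable]: "(\<lambda>(s,t). F s t) \<in> borel_measurable (lborel \<Otimes>\<^sub>M lborel)"
    unfolding F_def by measurable
  have B0: "B \<ge> 0" using B[of 0] by simp
  have "integrable (lborel \<Otimes>\<^sub>M lborel) (\<lambda>(s,t). F s t)"
  proof (rule integrableI_bounded)
    show "(\<lambda>(s,t). F s t) \<in> borel_measurable (lborel \<Otimes>\<^sub>M lborel)" by (rule Fm)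
    have "(\<integral>\<^sup>+x. ennreal (norm ((\<lambda>(s,t). F s t) x)) \<partial>(lborel \<Otimes>\<^sub>M lborel))
        = (\<integral>\<^sup>+s. \<integral>\<^sup>+t. ennreal (norm (F s t)) \<partial>lborel \<partial>lborel)"
      by (subst lborel.nn_integral_fst[symmetric]) (auto simp: case_prod_beta)
    also have "\<dots> \<le> (\<integral>\<^sup>+s. ennreal B * (ennreal (1 / cosh s) * indicator {0<..} s) \<partial>lborel)"
    proof (intro nn_integral_mono)
      fix s :: real
      have "(\<integral>\<^sup>+t. ennreal (norm (F s t)) \<partial>lborel) \<le> (\<integral>\<^sup>+t. ennreal B * indicator {0<..} s * (ennreal (exp (-t*cosh s)) * indicator {0<..} t) \<partial>lborel)"
      proof (intro nn_integral_mono)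
        fix t :: real
        have "norm (F s t) \<le> B * indicator {0<..} s * (exp (-t*cosh s) * indicator {0<..} t)"
          using B[of t] by (auto simp: F_def abs_mult split: split_indicator intro!: mult_right_mono)
        then have "ennreal (norm (F s t)) \<le> ennreal (B * indicator {0<..} s * (exp (-t*cosh s) * indicator {0<..} t))"
          by (rule ennreal_leI)
        also have "\<dots> = ennreal B * indicator {0<..} s * (ennreal (exp (-t*cosh s)) * indicator {0<..} t)"
          using B0 by (auto simp: ennreal_mult split: split_indicator)
        finally show "ennreal (norm (F s t)) \<le> ennreal B * indicator {0<..} s * (ennreal (exp (-t*cosh s)) * indicator {0<..} t)" .
      qed
      also have "\<dots> = ennreal B * indicator {0<..} s * (\<integral>\<^sup>+t. ennreal (exp (-t*cosh s)) * indicator {0<..} t \<partial>lborel)"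
        by (rule nn_integral_cmult) measurable
      also have "\<dots> = ennreal B * (ennreal (1 / cosh s) * indicator {0<..} s)"
        using nn_exp_cosh[of s] by (simp add: mult_ac)
      finally show "(\<integral>\<^sup>+t. ennreal (norm (F s t)) \<partial>lborel) \<le> ennreal B * (ennreal (1 / cosh s) * indicator {0<..} s)" .
    qed
    also have "\<dots> = ennreal B * (\<integral>\<^sup>+s. ennreal (1 / cosh s) * indicator {0<..} s \<partial>lborel)"
      by (rule nn_integral_cmult) measurable
    also have "\<dots> \<le> ennreal B * 2" by (intro mult_left_mono nn_inv_cosh_le) auto
    also have "\<dots> < \<infinity>" by (simp add: ennreal_mult_less_top)
    finally show "(\<integral>\<^sup>+x. ennreal (norm ((\<lambda>(s,t). F s t) x)) \<partial>(lborel \<Otimes>\<^sub>M lborel)) < \<infinity>" .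
  qed
  then have fub: "(\<integral>t. (\<integral>s. F s t \<partial>lborel) \<partial>lborel) = (\<integral>s. (\<integral>t. F s t \<partial>lborel) \<partial>lborel)"
    by (rule lborel_pair.Fubini_integral)
  have l: "(\<integral>s. F s t \<partial>lborel) = indicator {0<..} t *\<^sub>R (besselK0 t * g t)" for t
  proof -
    have "(\<integral>s. F s t \<partial>lborel) = (\<integral>s. indicator {0<..} s *\<^sub>R exp (-t*cosh s) \<partial>lborel) * (indicator {0<..} t * g t)"
    proof -
      have "F s t = (indicator {0<..} s *\<^sub>R exp (-t*cosh s)) * (indicator {0<..} t * g t)" for s
        by (simp add: F_def mult_ac)
      then show ?thesis by (simp only: integral_mult_left_zero)
    qed
    then show ?thesis by (simp add: K0_alt set_lebesgue_integral_def mult_ac)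
  qed
  have r: "(\<integral>t. F s t \<partial>lborel) = indicator {0<..} s *\<^sub>R (LBINT t:{0<..}. exp (-t*cosh s) * g t)" for s
  proof -
    have "F s t = indicator {0<..} s * (indicator {0<..} t *\<^sub>R (exp (-t*cosh s) * g t))" for t
      by (simp add: F_def mult_ac)
    then show ?thesis unfolding set_lebesgue_integral_def by (simp only: integral_mult_right_zero) simp
  qed
  show ?thesis using fub unfolding l r by (simp add: set_lebesgue_integral_def)
qed

lemma inner_cos:
  assumes p: "(p::real) > 0"
  shows "(LBINT t:{0<..}. exp (-t*p) * cos (Y*t)) = p / (p^2 + Y^2)"
proof -
  have pY: "p^2 + Y^2 > 0" using p by (simp add: add_pos_nonneg)
  define k where "k = 1 / (p^2 + Y^2)"
  define F where "F t = exp (-t*p) * (Y * sin (Y*t) - p * cos (Y*t)) * k" for t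
  have int: "set_integrable lborel {0<..} (\<lambda>t. exp (-t*p) * cos (Y*t))"
  proof (rule set_integrable_bound[OF integrable_I0i_exp_mscale[OF p]])
    show "set_borel_measurable lborel {0<..} (\<lambda>t. exp (- t * p) * cos (Y * t))"
      unfolding set_borel_measurable_def by measurable
    show "AE x in lborel. x \<in> {0<..} \<longrightarrow> norm (exp (- x * p) * cos (Y * x)) \<le> norm (exp (- (x * p)))"
      by (intro AE_I2) (auto simp: abs_mult intro!: mult_left_le)
  qed
  have "(LBINT t=0..\<infinity>. exp (-t*p) * cos (Y*t)) = 0 - F 0"
  proof (rule interval_integral_FTC_integrable)
    show "(0::ereal) < \<infinity>" by simp
    fix x :: real
    have "(F has_real_derivative (exp (-x*p) * ((p^2 + Y^2) * cos (Y*x))) * k) (at x)"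
      unfolding F_def
      by (auto intro!: derivative_eq_intros simp: algebra_simps power2_eq_square)
    then have "(F has_real_derivative exp (-x*p) * cos (Y*x)) (at x)"
      using pY p by (simp add: k_def)
    then show "(F has_vector_derivative exp (-x*p) * cos (Y*x)) (at x)"
      by (simp add: has_real_derivative_iff_has_vector_derivative)
    show "isCont (\<lambda>t. exp (-t*p) * cos (Y*t)) x" by (intro continuous_intros)
  next
    show "set_integrable lborel (einterval 0 \<infinity>) (\<lambda>t. exp (-t*p) * cos (Y*t))"
      using int by (simp add: einterval_def zero_ereal_def greaterThan_def)
    show "((F \<circ> real_of_ereal) \<longlongrightarrow> F 0) (at_right 0)"
      unfolding F_def by (auto simp: zero_ereal_def ereal_tendsto_simps intro!: tendsto_eq_intros)
    have lim0: "((\<lambda>t. exp (-t*p)) \<longlongrightarrow> 0) at_top"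
      using p by (auto intro!: exp_at_bot[THEN filterlim_compose] filterlim_tendsto_pos_mult_at_top filterlim_ident
             simp: filterlim_uminus_at_bot mult.commute[of _ p])
    have "(F \<longlongrightarrow> 0) at_top"
    proof (rule Lim_null_comparison)
      show "\<forall>\<^sub>F t in at_top. norm (F t) \<le> exp (-t*p) * ((\<bar>Y\<bar> + p) / (p^2 + Y^2))"
      proof (intro always_eventually allI)
        fix t :: real
        have "\<bar>Y * sin (Y*t) - p * cos (Y*t)\<bar> \<le> \<bar>Y\<bar> + p"
        proof -
          have "\<bar>Y * sin (Y*t)\<bar> \<le> \<bar>Y\<bar>" by (simp add: abs_mult mult_left_le)
          moreover have "\<bar>p * cos (Y*t)\<bar> \<le> p" using p by (simp add: abs_mult mult_left_le)
          ultimately show ?thesis by linarith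
        qed
        then show "norm (F t) \<le> exp (-t*p) * ((\<bar>Y\<bar> + p) / (p^2 + Y^2))"
          unfolding F_def k_def using pY by (simp add: abs_mult divide_right_mono mult_left_mono)
      qed
      show "((\<lambda>t. exp (-t*p) * ((\<bar>Y\<bar> + p) / (p^2 + Y^2))) \<longlongrightarrow> 0) at_top"
        by (rule tendsto_mult_left_zero[OF lim0])
    qed
    then show "((F \<circ> real_of_ereal) \<longlongrightarrow> 0) (at_left \<infinity>)"
      by (simp add: ereal_tendsto_simps)
  qed
  then show ?thesis
    using pY by (simp add: interval_lebesgue_integral_0_infty F_def k_def)
qed

lemma outer_int:
  "(LBINT s:{0<..}. cosh s / ((cosh s)^2 + Y^2)) = pi / (2 * sqrt (1 + Y^2))"
proof -
  define A where "A = sqrt (1 + Y^2)"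
  have A: "A > 0" "A^2 = 1 + Y^2" unfolding A_def by (auto simp: add_pos_nonneg)
  define F where "F s = arctan (sinh s / A) / A" for s
  have "(LBINT s=0..\<infinity>. cosh s / ((cosh s)^2 + Y^2)) = pi / 2 / A - 0"
  proof (rule interval_integral_FTC_nonneg)
    show "(0::ereal) < \<infinity>" by simp
    fix x :: real
    have "(F has_real_derivative cosh x / ((cosh x)^2 + Y^2)) (at x)"
    proof -
      have "(F has_real_derivative (inverse (1 + (sinh x / A)^2) * (cosh x / A)) / A) (at x)"
        unfolding F_def using A by (auto intro!: derivative_eq_intros)
      moreover have "(inverse (1 + (sinh x / A)^2) * (cosh x / A)) / A = cosh x / ((cosh x)^2 + Y^2)"
      proof -
        have "(1 + (sinh x / A)^2) * A^2 = A^2 + (sinh x)^2"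
          using A(1) by (simp add: distrib_right power_divide)
        also have "\<dots> = (cosh x)^2 + Y^2" using A(2) cosh_square_eq[of x] by linarith
        finally have e: "(1 + (sinh x / A)^2) * A^2 = (cosh x)^2 + Y^2" .
        have gen: "inverse a * (c / A) / A = c / (a * A^2)" for a c :: real
          using A(1) by (cases "a = 0") (simp_all add: field_simps power2_eq_square)
        have "(inverse (1 + (sinh x / A)^2) * (cosh x / A)) / A = cosh x / ((1 + (sinh x / A)^2) * A^2)"
          by (rule gen)
        then show ?thesis using e by simp
      qed
      ultimately show ?thesis by simp
    qed
    then show "DERIV F x :> cosh x / ((cosh x)^2 + Y^2)" .
    show "isCont (\<lambda>s. cosh s / ((cosh s)^2 + Y^2)) x"
      by (intro continuous_intros) (simp add: add_pos_nonneg)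
  next
    show "AE x in lborel. 0 < ereal x \<longrightarrow> ereal x < \<infinity> \<longrightarrow> 0 \<le> cosh x / ((cosh x)^2 + Y^2)"
      by (intro AE_I2) (simp add: add_nonneg_nonneg)
    show "((F \<circ> real_of_ereal) \<longlongrightarrow> 0) (at_right 0)"
      unfolding F_def using A(1) by (auto simp: zero_ereal_def ereal_tendsto_simps intro!: tendsto_eq_intros)
    have lim: "((\<lambda>s. arctan ((1/A) * sinh s)) \<longlongrightarrow> pi/2) at_top"
      by (rule filterlim_compose[OF tendsto_arctan_at_top filterlim_tendsto_pos_mult_at_top[OF tendsto_const _ sinh_real_at_top]]) (use A in simp)
    have "(F \<longlongrightarrow> pi / 2 / A) at_top"
      unfolding F_def using tendsto_divide[OF lim tendsto_const[of A]] A by simp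
    then show "((F \<circ> real_of_ereal) \<longlongrightarrow> pi / 2 / A) (at_left \<infinity>)"
      by (simp add: ereal_tendsto_simps)
  qed
  then show ?thesis by (simp add: interval_lebesgue_integral_0_infty A_def)
qed

lemma C_closed: "(LBINT t:{0<..}. besselK0 t * cos (Y*t)) = pi / (2 * sqrt (1 + Y^2))"
proof -
  have "(LBINT t:{0<..}. besselK0 t * cos (Y*t)) = (LBINT s:{0<..}. (LBINT t:{0<..}. exp (-t*cosh s) * cos (Y*t)))"
    by (rule K0_fubini[where B=1]) auto
  also have "\<dots> = (LBINT s:{0<..}. cosh s / ((cosh s)^2 + Y^2))"
  proof (intro set_lebesgue_integral_cong allI impI)
    fix s :: real
    show "(LBINT t:{0<..}. exp (-t*cosh s) * cos (Y*t)) = cosh s / ((cosh s)^2 + Y^2)"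
      by (rule inner_cos) simp
  qed auto
  also have "\<dots> = pi / (2 * sqrt (1 + Y^2))" by (rule outer_int)
  finally show ?thesis .
qed

lemma K0_series:
  fixes h :: "nat \<Rightarrow> real \<Rightarrow> real" and H :: "real \<Rightarrow> real" and b :: "nat \<Rightarrow> real" and p :: "nat \<Rightarrow> nat"
  assumes hm[measurable]: "\<And>n. h n \<in> borel_measurable borel"
    and b0: "\<And>n. b n \<ge> 0"
    and hb: "\<And>n t. t > 0 \<Longrightarrow> \<bar>h n t\<bar> \<le> b n * t^(p n)"
    and bs: "summable (\<lambda>n. b n * fact (p n))"
    and hs: "\<And>t. t > 0 \<Longrightarrow> summable (\<lambda>n. \<bar>h n t\<bar>)"
    and hH: "\<And>t. t > 0 \<Longrightarrow> (\<lambda>n. h n t) sums H t"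
  shows "set_integrable lborel {0<..} (\<lambda>t. besselK0 t * H t)"
    and "(\<lambda>n. LBINT t:{0<..}. besselK0 t * h n t) sums (LBINT t:{0<..}. besselK0 t * H t)"
proof -
  define f where "f n t = indicator {0<..} t *\<^sub>R (besselK0 t * h n t)" for n t
  have fi: "integrable lborel (f n)" for n
    using K0_g_integrable[OF hm b0 hb] unfolding f_def set_integrable_def by simp
  have fs: "AE t in lborel. summable (\<lambda>n. norm (f n t))"
  proof (intro AE_I2)
    fix t :: real
    show "summable (\<lambda>n. norm (f n t))"
    proof (cases "t > 0")
      case True
      then have "summable (\<lambda>n. besselK0 t * \<bar>h n t\<bar>)" by (intro summable_mult hs)
      then show ?thesis using True K0_nonneg[of t] by (simp add: f_def abs_mult)
    qed (simp add: f_def)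
  qed
  have fn: "summable (\<lambda>n. \<integral>t. norm (f n t) \<partial>lborel)"
  proof (rule summable_comparison_test[of _ "\<lambda>n. 2 * (b n * fact (p n))"])
    show "\<exists>N. \<forall>n\<ge>N. norm (\<integral>t. norm (f n t) \<partial>lborel) \<le> 2 * (b n * fact (p n))"
    proof (intro exI allI impI)
      fix n
      have "(\<integral>t. norm (f n t) \<partial>lborel) \<le> 2 * b n * fact (p n)"
        unfolding f_def by (rule K0_g_norm_le[OF hm b0 hb])
      moreover have "0 \<le> (\<integral>t. norm (f n t) \<partial>lborel)" by simp
      ultimately show "norm (\<integral>t. norm (f n t) \<partial>lborel) \<le> 2 * (b n * fact (p n))" by simp
    qed
    show "summable (\<lambda>n. 2 * (b n * fact (p n)))" by (intro summable_mult bs)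
  qed
  have sumf: "(\<Sum>n. f n t) = indicator {0<..} t *\<^sub>R (besselK0 t * H t)" for t
  proof (cases "t > 0")
    case True
    have "(\<lambda>n. besselK0 t * h n t) sums (besselK0 t * H t)" by (intro sums_mult hH True)
    then show ?thesis using True by (simp add: f_def sums_iff)
  qed (simp add: f_def)
  show "set_integrable lborel {0<..} (\<lambda>t. besselK0 t * H t)"
    using integrable_suminf[OF fi fs fn] unfolding sumf set_integrable_def .
  show "(\<lambda>n. LBINT t:{0<..}. besselK0 t * h n t) sums (LBINT t:{0<..}. besselK0 t * H t)"
  proof -
    have "(\<lambda>i. integral\<^sup>L lborel (f i)) sums (\<integral>x. (\<Sum>i. f i x) \<partial>lborel)"
      by (rule sums_integral[OF fi fs fn])
    then have "(\<lambda>i. integral\<^sup>L lborel (f i)) sums (\<integral>x. indicator {0<..} x *\<^sub>R (besselK0 x * H x) \<partial>lborel)"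
      by (simp only: sumf)
    then show ?thesis by (simp add: set_lebesgue_integral_def f_def[abs_def])
  qed
qed



definition TT :: "real \<Rightarrow> nat \<Rightarrow> nat \<Rightarrow> real" where
  "TT y n r = (if 2*r \<le> n then fact n / (fact (n - 2*r) * 4^r * (fact r)^2) * (-1)^r * (-y)^(n - 2*r) else 0)"

lemma TT0: "TT y n 0 = (-y)^n" by (simp add: TT_def)

lemma TT_eq: "TT y (2*r + k) r = fact (2*r + k) / (fact k * 4^r * (fact r)^2) * (-1)^r * (-y)^k"
  by (simp add: TT_def)

lemma TT_rec:
  "real (m+2) * TT y (m+2) r + real (2*m+3) * y * TT y (m+1) r + real (m+1) * y^2 * TT y m r
   + real (m+1) * (if r = 0 then 0 else TT y m (r - 1)) = 0"
proof (cases r)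
  case 0
  have p: "(-y)^(m+2) = y^2 * (-y)^m" "(-y)^(m+1) = - y * (-y)^m" by (simp_all add: power2_eq_square)
  show ?thesis using 0 by (simp add: TT0 p algebra_simps power2_eq_square)
next
  case (Suc s)
  consider (a) "2*r \<le> m" | (b) "2*r = m+1" | (c) "2*r = m+2" | (d) "2*r > m+2" by linarith
  then show ?thesis
  proof cases
    case a
    then obtain j where m: "m = 2*r + j" using le_Suc_ex by blast
    have e1: "m + 2 - 2*r = j + 2" "m + 1 - 2*r = j + 1" "m - 2*r = j" "m - 2 * s = j + 2" using m Suc by auto
    define X where "X = fact m * inverse (fact (j+2)) * inverse (4^r) * inverse ((fact r)^2) * (-1)^r * (-y)^j"
    have ff: "fact (m+2) = real (m+2) * real (m+1) * fact m" "fact (m+1) = real (m+1) * fact m"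
       "fact (Suc (Suc m)) = real (m+2) * real (m+1) * fact m" "fact (Suc m) = real (m+1) * fact m"
      by (simp_all add: fact_Suc algebra_simps)
    have i1: "inverse (fact (j+1) :: real) = real (j+2) * inverse (fact (j+2))"
      by (simp add: fact_Suc del: of_nat_Suc)
    have i0: "inverse (fact j :: real) = real (j+1) * inverse (fact (j+1))"
      by (simp add: fact_Suc del: of_nat_Suc)
    have i2: "inverse (fact j :: real) = real (j+2) * real (j+1) * inverse (fact (j+2))"
      by (simp only: i0 i1 mult_ac)
    have i1s: "inverse (fact (Suc j) :: real) = real (Suc (Suc j)) * inverse (fact (Suc (Suc j)))"
      using i1 by simp
    have i2s: "inverse (fact j :: real) = real (Suc (Suc j)) * real (Suc j) * inverse (fact (Suc (Suc j)))"
      using i2 by simp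
    have g: "inverse (fact s :: real) = real r * inverse (fact r)" "inverse ((4::real)^s) = 4 * inverse (4^r)" "(-1::real)^s = - ((-1)^r)"
      using Suc by (auto simp: power_mult_distrib)
    have p: "(-y)^(j+2) = y^2 * (-y)^j" "(-y)^(j+1) = - y * (-y)^j" by (simp_all add: power2_eq_square)
    have m1: "m+2 = 2*r + (j+2)" "m+1 = 2*r+(j+1)" "m = 2*r + j" "m = 2 * s + (j+2)" using m Suc by auto
    have t1: "TT y (m+2) r = real (m+2) * real (m+1) * y^2 * X"
      unfolding m1(1) TT_eq unfolding m1(1)[symmetric] by (simp add: X_def p ff divide_inverse mult_ac power2_eq_square del: fact_Suc)
    have t2: "TT y (m+1) r = - real (m+1) * real (j+2) * y * X"
      unfolding m1(2) TT_eq unfolding m1(2)[symmetric] by (simp add: X_def p ff i1 i1s divide_inverse mult_ac del: fact_Suc of_nat_Suc)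
    have t3: "TT y m r = real (j+2) * real (j+1) * X"
      apply (subst (1) m1(3)) unfolding TT_eq unfolding m1(3)[symmetric] by (simp add: X_def p i2 i2s divide_inverse mult_ac del: fact_Suc of_nat_Suc)
    have t4: "TT y m s = - 4 * (real r)^2 * y^2 * X"
      apply (subst (1) m1(4)) unfolding TT_eq unfolding m1(4)[symmetric] by (simp add: X_def p g divide_inverse mult_ac power2_eq_square del: fact_Suc of_nat_Suc)
    have key: "(real m + 2)^2 - (2*real m + 3)*(real j + 2) + (real j + 2)*(real j + 1) - 4*(real r)^2 = 0"
      using m by (simp add: algebra_simps power2_eq_square)
    have "real (m+2) * TT y (m+2) r + real (2*m+3) * y * TT y (m+1) r + real (m+1) * y^2 * TT y m r
      + real (m+1) * (if r = 0 then 0 else TT y m (r - 1))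
      = real (m+1) * y^2 * X * ((real m + 2)^2 - (2*real m + 3)*(real j + 2) + (real j + 2)*(real j + 1) - 4*(real r)^2)"
    proof -
      have rs: "r \<noteq> 0" "r - 1 = s" using Suc by auto
      have "real (m+2) * TT y (m+2) r + real (2*m+3) * y * TT y (m+1) r + real (m+1) * y^2 * TT y m r
        + real (m+1) * (if r = 0 then 0 else TT y m (r - 1))
        = real (m+2) * (real (m+2) * real (m+1) * y^2 * X) + real (2*m+3) * y * (- real (m+1) * real (j+2) * y * X)
          + real (m+1) * y^2 * (real (j+2) * real (j+1) * X) + real (m+1) * (- 4 * (real r)^2 * y^2 * X)"
        by (simp only: t1 t2 t3 t4 rs if_False)
      also have "\<dots> = real (m+1) * y^2 * X * ((real m + 2)^2 - (2*real m + 3)*(real j + 2) + (real j + 2)*(real j + 1) - 4*(real r)^2)"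
        by (simp add: algebra_simps power2_eq_square)
      finally show ?thesis .
    qed
    then show ?thesis using key by simp
  next
    case b
    define Z where "Z = fact m * inverse (4^r) * inverse (fact r) * inverse (fact r) * (-1)^r * y"
    have ff: "fact (m+2) = real (m+2) * real (m+1) * fact m" "fact (m+1) = real (m+1) * fact m"
       "fact (Suc (Suc m)) = real (m+2) * real (m+1) * fact m" "fact (Suc m) = real (m+1) * fact m"
      by (simp_all add: fact_Suc algebra_simps)
    have g: "inverse (fact s :: real) = real r * inverse (fact r)" "inverse ((4::real)^s) = 4 * inverse (4^r)" "(-1::real)^s = - ((-1)^r)"
      using Suc by (auto simp: power_mult_distrib)
    have m1: "m+2 = 2*r + 1" "m+1 = 2*r+0" "m = 2 * s + 1" using b Suc by auto
    have z0: "TT y m r = 0" using b by (simp add: TT_def)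
    have t1: "TT y (m+2) r = - real (m+2) * real (m+1) * Z"
      unfolding m1(1) TT_eq unfolding m1(1)[symmetric] by (simp add: Z_def ff divide_inverse mult_ac power2_eq_square del: fact_Suc) (simp add: algebra_simps)
    have t2: "y * TT y (m+1) r = real (m+1) * Z"
      unfolding m1(2) TT_eq unfolding m1(2)[symmetric] by (simp add: Z_def ff divide_inverse mult_ac power2_eq_square del: fact_Suc)
    have t4: "TT y m s = 4 * (real r)^2 * Z"
      apply (subst (1) m1(3)) unfolding TT_eq unfolding m1(3)[symmetric] by (simp add: Z_def g divide_inverse mult_ac power2_eq_square del: fact_Suc of_nat_Suc)
    have rr: "4 * (real r)^2 = (real m + 1)^2"
    proof -
      have "2 * real r = real m + 1" using b by (metis of_nat_1 of_nat_add of_nat_mult of_nat_numeral)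
      then have "(2 * real r)^2 = (real m + 1)^2" by simp
      then show ?thesis by (simp add: power_mult_distrib)
    qed
    have rs: "r \<noteq> 0" "r - 1 = s" using Suc by auto
    have "real (m+2) * TT y (m+2) r + real (2*m+3) * y * TT y (m+1) r + real (m+1) * y^2 * TT y m r
        + real (m+1) * (if r = 0 then 0 else TT y m (r - 1))
        = real (m+2) * (- real (m+2) * real (m+1) * Z) + real (2*m+3) * (real (m+1) * Z)
          + real (m+1) * (4 * (real r)^2 * Z)"
      by (simp only: t1 t2[symmetric] t4 z0 rs if_False)
    also have "\<dots> = real (m+1) * Z * ((2 * real m + 3) + 4 * (real r)^2 - (real m + 2)^2)"
      by (simp add: algebra_simps power2_eq_square)
    also have "\<dots> = 0" unfolding rr by (simp add: algebra_simps power2_eq_square)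
    finally show ?thesis .
  next
    case c
    define Z where "Z = (fact m :: real) * inverse (4^r) * inverse (fact r) * inverse (fact r) * (-1)^r"
    have ff: "fact (m+2) = real (m+2) * real (m+1) * fact m" "fact (m+1) = real (m+1) * fact m"
       "fact (Suc (Suc m)) = real (m+2) * real (m+1) * fact m" "fact (Suc m) = real (m+1) * fact m"
      by (simp_all add: fact_Suc algebra_simps)
    have g: "inverse (fact s :: real) = real r * inverse (fact r)" "inverse ((4::real)^s) = 4 * inverse (4^r)" "(-1::real)^s = - ((-1)^r)"
      using Suc by (auto simp: power_mult_distrib)
    have m1: "m+2 = 2*r + 0" "m = 2 * s + 0" using c Suc by auto
    have z0: "TT y m r = 0" "TT y (m+1) r = 0" using c by (simp_all add: TT_def)
    have t1: "TT y (m+2) r = real (m+2) * real (m+1) * Z"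
      unfolding m1(1) TT_eq unfolding m1(1)[symmetric] by (simp add: Z_def ff divide_inverse mult_ac power2_eq_square del: fact_Suc)
    have t4: "TT y m s = - 4 * (real r)^2 * Z"
      apply (subst (1) m1(2)) unfolding TT_eq unfolding m1(2)[symmetric] by (simp add: Z_def g divide_inverse mult_ac power2_eq_square del: fact_Suc of_nat_Suc)
    have rr: "4 * (real r)^2 = (real m + 2)^2"
    proof -
      have "2 * real r = real m + 2" using c by (metis of_nat_add of_nat_mult of_nat_numeral)
      then have "(2 * real r)^2 = (real m + 2)^2" by simp
      then show ?thesis by (simp add: power_mult_distrib)
    qed
    have rs: "r \<noteq> 0" "r - 1 = s" using Suc by auto
    have "real (m+2) * TT y (m+2) r + real (2*m+3) * y * TT y (m+1) r + real (m+1) * y^2 * TT y m r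
        + real (m+1) * (if r = 0 then 0 else TT y m (r - 1))
        = real (m+2) * (real (m+2) * real (m+1) * Z) + real (m+1) * (- 4 * (real r)^2 * Z)"
      by (simp only: t1 t4 z0 rs if_False)
    also have "\<dots> = real (m+1) * Z * ((real m + 2)^2 - 4 * (real r)^2)"
      by (simp add: algebra_simps power2_eq_square)
    also have "\<dots> = 0" unfolding rr by simp
    finally show ?thesis .
  next
    case d then show ?thesis using Suc by (simp add: TT_def)
  qed
qed

definition qq :: "real \<Rightarrow> nat \<Rightarrow> real" where
  "qq y n = (\<Sum>r<Suc n. TT y n r)"

lemma TT_zero: "n < 2*r \<Longrightarrow> TT y n r = 0" by (simp add: TT_def)

lemma qq_ext: assumes "n < 2*N" shows "qq y n = (\<Sum>r<N. TT y n r)"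
proof -
  have a: "(\<Sum>r<M. TT y n r) = (\<Sum>r<Suc n. TT y n r)" if "n < 2*M" for M
  proof (cases "M \<le> Suc n")
    case True
    show ?thesis
      by (rule sum.mono_neutral_left) (use True that in \<open>auto intro!: TT_zero\<close>)
  next
    case False
    show ?thesis
      by (rule sum.mono_neutral_right) (use False that in \<open>auto intro!: TT_zero\<close>)
  qed
  show ?thesis unfolding qq_def using a[OF assms] by simp
qed

lemma qq_0: "qq y 0 = 1" by (simp add: qq_def TT_def)
lemma qq_1: "qq y (Suc 0) = - y" by (simp add: qq_def TT_def)

lemma qq_rec: "real (m+2) * qq y (m+2) + real (2*m+3) * y * qq y (m+1) + real (m+1) * (1 + y^2) * qq y m = 0"
proof -
  have e1: "qq y (m+2) = (\<Sum>r<Suc (m+2). TT y (m+2) r)" by (rule qq_ext) simp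
  have e2: "qq y (m+1) = (\<Sum>r<Suc (m+2). TT y (m+1) r)" by (rule qq_ext) simp
  have e3: "qq y m = (\<Sum>r<Suc (m+2). TT y m r)" by (rule qq_ext) simp
  have e4: "qq y m = (\<Sum>r<Suc (m+2). (if r = 0 then 0 else TT y m (r - 1)))"
  proof -
    have "(\<Sum>r<Suc (m+2). (if r = 0 then 0 else TT y m (r - 1))) = (\<Sum>r<m+2. TT y m r)"
      by (subst sum.lessThan_Suc_shift) simp
    also have "\<dots> = qq y m" by (rule qq_ext[symmetric]) simp
    finally show ?thesis by simp
  qed
  have "real (m+2) * qq y (m+2) + real (2*m+3) * y * qq y (m+1) + real (m+1) * (1 + y^2) * qq y m
     = real (m+2) * qq y (m+2) + real (2*m+3) * y * qq y (m+1) + real (m+1) * y^2 * qq y m + real (m+1) * qq y m"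
    by (simp add: algebra_simps)
  also have "\<dots> = (\<Sum>r<Suc (m+2). real (m+2) * TT y (m+2) r + real (2*m+3) * y * TT y (m+1) r + real (m+1) * y^2 * TT y m r
   + real (m+1) * (if r = 0 then 0 else TT y m (r - 1)))"
    apply (subst (1) e1, subst (1) e2, subst (1) e3, subst e4)
    by (simp only: sum.distrib sum_distrib_left)
  also have "\<dots> = 0" by (simp only: TT_rec sum.neutral_const)
  finally show ?thesis .
qed

lemma TT_bound: "\<bar>TT y n r\<bar> \<le> (if 2*r \<le> n then real (n choose (2*r)) * \<bar>y\<bar>^(n - 2*r) else 0)"
proof (cases "2*r \<le> n")
  case True
  have f1: "fact (2*r) \<le> (4::real)^r * (fact r)^2"
  proof -
    have "real ((2*r) choose r) \<le> 2^(2*r)"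
      using binomial_le_pow2[of "2*r" r] by (metis of_nat_le_iff of_nat_numeral of_nat_power)
    then have "real ((2*r) choose r) \<le> 4^r" by (simp add: power_mult)
    moreover have "fact (2*r) = real ((2*r) choose r) * (fact r)^2"
      using binomial_fact[of r "2*r", where 'a=real] by (simp add: power2_eq_square mult_2 field_simps)
    ultimately show ?thesis by (simp add: mult_right_mono)
  qed
  have "\<bar>TT y n r\<bar> = fact n / (fact (n - 2*r) * 4^r * (fact r)^2) * \<bar>y\<bar>^(n - 2*r)"
    using True by (simp add: TT_def abs_mult power_abs)
  also have "\<dots> \<le> fact n / (fact (n - 2*r) * fact (2*r)) * \<bar>y\<bar>^(n - 2*r)"
    using f1 by (intro mult_right_mono divide_left_mono mult_left_mono) (auto intro!: mult_pos_pos)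
  also have "fact n / (fact (n - 2*r) * fact (2*r)) = real (n choose (2*r))"
    using binomial_fact[OF True, where 'a=real] by (simp add: mult.commute)
  finally show ?thesis using True by simp
qed (simp add: TT_def)

lemma qq_bound: "\<bar>qq y n\<bar> \<le> (1 + \<bar>y\<bar>)^n"
proof -
  define g where "g k = (if k \<le> n then real (n choose k) * \<bar>y\<bar>^(n - k) else 0)" for k
  have "\<bar>qq y n\<bar> \<le> (\<Sum>r<Suc n. \<bar>TT y n r\<bar>)" unfolding qq_def by (rule sum_abs)
  also have "\<dots> \<le> (\<Sum>r<Suc n. g (2*r))"
    by (intro sum_mono) (use TT_bound in \<open>simp add: g_def\<close>)
  also have "\<dots> = (\<Sum>k\<in>(\<lambda>r. 2*r) ` {..<Suc n}. g k)"
    by (subst sum.reindex) (auto simp: inj_on_def)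
  also have "\<dots> \<le> (\<Sum>k<2*n+2. g k)"
    by (intro sum_mono2) (auto simp: g_def)
  also have "\<dots> = (\<Sum>k\<le>n. g k)"
    by (rule sum.mono_neutral_right) (auto simp: g_def)
  also have "\<dots> = (\<Sum>k\<le>n. real (n choose k) * \<bar>y\<bar>^(n - k))"
    by (intro sum.cong) (auto simp: g_def)
  also have "\<dots> = (1 + \<bar>y\<bar>)^n"
    by (subst binomial_ring) simp
  finally show ?thesis .
qed

definition QQ :: "real \<Rightarrow> real \<Rightarrow> real" where
  "QQ y x = 1 + 2*y*x + (1 + y^2)*x^2"

lemma QQ_pos: "QQ y x > 0"
proof -
  have e: "QQ y x = (1 + y*x)^2 + x^2" by (simp add: QQ_def algebra_simps power2_eq_square)
  show ?thesis
  proof (cases "x = 0")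
    case True then show ?thesis by (simp add: QQ_def)
  next
    case False
    then have "x^2 > 0" by simp
    then show ?thesis unfolding e by (simp add: add_nonneg_pos)
  qed
qed

lemma qq_summable:
  assumes "\<bar>x\<bar> < 1 / (1 + \<bar>y\<bar>)"
  shows "summable (\<lambda>n. qq y n * x^n)"
proof (rule summable_comparison_test[of _ "\<lambda>n. ((1 + \<bar>y\<bar>) * \<bar>x\<bar>)^n"])
  have c: "(1 + \<bar>y\<bar>) * \<bar>x\<bar> < 1"
    using assms by (simp add: field_simps add_pos_nonneg)
  show "summable (\<lambda>n. ((1 + \<bar>y\<bar>) * \<bar>x\<bar>)^n)"
    by (rule summable_geometric) (use c in simp)
  show "\<exists>N. \<forall>n\<ge>N. norm (qq y n * x^n) \<le> ((1 + \<bar>y\<bar>) * \<bar>x\<bar>)^n"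
    by (intro exI allI impI)
       (auto simp: abs_mult power_abs power_mult_distrib intro!: mult_right_mono qq_bound)
qed

definition sh :: "(nat \<Rightarrow> real) \<Rightarrow> nat \<Rightarrow> real" where
  "sh a n = (case n of 0 \<Rightarrow> 0 | Suc m \<Rightarrow> a m)"

lemma sums_sh:
  assumes "(\<lambda>n. a n * x^n) sums s"
  shows "(\<lambda>n. sh a n * x^n) sums (x * s)"
proof -
  have "(\<lambda>n. x * (a n * x^n)) sums (x * s)" by (rule sums_mult[OF assms])
  then have "(\<lambda>n. sh a (Suc n) * x^(Suc n)) sums (x * s)" by (simp add: sh_def mult_ac)
  then show ?thesis by (subst (asm) sums_Suc_iff) (simp add: sh_def)
qed

lemma coef0:
  "diffs (qq y) n + 2*y * sh (diffs (qq y)) n + (1+y^2) * sh (sh (diffs (qq y))) n + y * qq y n + (1+y^2) * sh (qq y) n = 0"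
proof (cases n)
  case 0
  then show ?thesis by (simp add: diffs_def sh_def qq_0 qq_1)
next
  case (Suc k)
  show ?thesis
  proof (cases k)
    case 0
    have "real (0+2) * qq y (0+2) + real (2*0+3) * y * qq y (0+1) + real (0+1) * (1 + y^2) * qq y 0 = 0"
      by (rule qq_rec)
    then show ?thesis using Suc 0 by (simp add: diffs_def sh_def qq_0 qq_1 algebra_simps)
  next
    case (Suc m)
    have "real ((m+1)+2) * qq y ((m+1)+2) + real (2*(m+1)+3) * y * qq y ((m+1)+1) + real ((m+1)+1) * (1 + y^2) * qq y (m+1) = 0"
      by (rule qq_rec)
    then show ?thesis using \<open>n = Suc k\<close> Suc
      by (simp add: diffs_def sh_def algebra_simps eval_nat_numeral)
  qed
qed

lemma qq_sums:
  assumes x: "\<bar>x\<bar> < 1 / (1 + \<bar>y\<bar>)"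
  shows "(\<lambda>n. qq y n * x^n) sums (1 / sqrt (QQ y x))"
proof -
  define R where "R = 1 / (1 + \<bar>y\<bar>)"
  have R: "R > 0" unfolding R_def by (simp add: add_pos_nonneg)
  define S where "S x = (\<Sum>n. qq y n * x^n)" for x
  define S1 where "S1 x = (\<Sum>n. diffs (qq y) n * x^n)" for x
  have ode: "QQ y x * S1 x + (y + (1+y^2)*x) * S x = 0" if xR: "\<bar>x\<bar> < R" for x
  proof -
    have sq: "(\<lambda>n. qq y n * x^n) sums S x"
      unfolding S_def using qq_summable xR unfolding R_def by (simp add: summable_sums)
    have "summable (\<lambda>n. diffs (qq y) n * x^n)"
      by (rule termdiff_converges[of x R]) (use xR qq_summable in \<open>auto simp: R_def\<close>)
    then have sd: "(\<lambda>n. diffs (qq y) n * x^n) sums S1 x"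
      unfolding S1_def by (simp add: summable_sums)
    have "(\<lambda>n. (diffs (qq y) n + 2*y * sh (diffs (qq y)) n + (1+y^2) * sh (sh (diffs (qq y))) n + y * qq y n + (1+y^2) * sh (qq y) n) * x^n)
      sums (S1 x + 2*y * (x * S1 x) + (1+y^2) * (x * (x * S1 x)) + y * S x + (1+y^2) * (x * S x))"
      using sums_add[OF sums_add[OF sums_add[OF sums_add[OF sd sums_mult[OF sums_sh[OF sd], of "2*y"]]
         sums_mult[OF sums_sh[OF sums_sh[OF sd]], of "1+y^2"]] sums_mult[OF sq, of y]] sums_mult[OF sums_sh[OF sq], of "1+y^2"]]
      by (simp add: algebra_simps)
    then have "(\<lambda>n. 0) sums (S1 x + 2*y * (x * S1 x) + (1+y^2) * (x * (x * S1 x)) + y * S x + (1+y^2) * (x * S x))"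
      by (simp only: coef0 mult_zero_left)
    then have "S1 x + 2*y * (x * S1 x) + (1+y^2) * (x * (x * S1 x)) + y * S x + (1+y^2) * (x * S x) = 0"
      using sums_unique2 sums_zero by blast
    then show ?thesis by (simp add: QQ_def algebra_simps power2_eq_square)
  qed
  define H where "H x = S x * sqrt (QQ y x)" for x
  have dH: "(H has_field_derivative 0) (at x within ball 0 R)" if "x \<in> ball 0 R" for x
  proof -
    have xR: "\<bar>x\<bar> < R" using that by (simp add: dist_norm)
    define K where "K = (\<bar>x\<bar> + R) / 2"
    have K: "\<bar>x\<bar> < K" "K < R" "K > 0" using xR R unfolding K_def by auto
    have dS: "(S has_field_derivative S1 x) (at x)"
      unfolding S_def S1_def
      by (rule termdiffs_strong[of _ K]) (use K qq_summable in \<open>auto simp: R_def\<close>)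
    have dQ: "((\<lambda>x. sqrt (QQ y x)) has_field_derivative (2*y + 2*(1+y^2)*x) / (2 * sqrt (QQ y x))) (at x)"
    proof -
      have d1: "((\<lambda>x. sqrt (QQ y x)) has_field_derivative inverse (sqrt (QQ y x)) / 2 * (2*y + (1+y^2) * (2 * x))) (at x)"
        unfolding QQ_def using QQ_pos[of y x] unfolding QQ_def
        by (auto intro!: derivative_eq_intros simp: power2_eq_square)
      have e: "inverse (sqrt (QQ y x)) / 2 * (2*y + (1+y^2) * (2 * x)) = (2*y + 2*(1+y^2)*x) / (2 * sqrt (QQ y x))"
        by (simp add: field_simps)
      show ?thesis using d1 unfolding e .
    qed
    have "(H has_field_derivative S1 x * sqrt (QQ y x) + S x * ((2*y + 2*(1+y^2)*x) / (2 * sqrt (QQ y x)))) (at x)"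
      unfolding H_def by (rule DERIV_cong[OF DERIV_mult[OF dS dQ]]) (simp only: mult.commute)
    moreover have "S1 x * sqrt (QQ y x) + S x * ((2*y + 2*(1+y^2)*x) / (2 * sqrt (QQ y x))) = 0"
    proof -
      have sp: "sqrt (QQ y x) > 0" using QQ_pos by simp
      have "S1 x * sqrt (QQ y x) + S x * ((2*y + 2*(1+y^2)*x) / (2 * sqrt (QQ y x)))
         = (QQ y x * S1 x + (y + (1+y^2)*x) * S x) / sqrt (QQ y x)"
      proof -
        have gen: "a * r + b * ((2*c) / (2 * r)) = (r*r*a + c*b) / r" if "r > 0" for a b c r :: real
          using that by (simp add: field_simps)
        have q: "QQ y x = sqrt (QQ y x) * sqrt (QQ y x)" using QQ_pos[of y x] by simp
        have "S1 x * sqrt (QQ y x) + S x * ((2*y + 2*(1+y^2)*x) / (2 * sqrt (QQ y x)))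
          = S1 x * sqrt (QQ y x) + S x * ((2*(y + (1+y^2)*x)) / (2 * sqrt (QQ y x)))"
          by (simp add: algebra_simps)
        also have "\<dots> = (sqrt (QQ y x) * sqrt (QQ y x) * S1 x + (y + (1+y^2)*x) * S x) / sqrt (QQ y x)"
          by (rule gen[OF sp])
        finally show ?thesis using q by simp
      qed
      then show ?thesis using ode[OF xR] by simp
    qed
    ultimately show ?thesis by (simp add: has_field_derivative_at_within)
  qed
  obtain c where c: "\<And>z. z \<in> ball 0 R \<Longrightarrow> H z = c"
    using has_field_derivative_zero_constant[OF convex_ball dH] by blast
  have "H 0 = 1" by (simp add: H_def S_def QQ_def qq_0)
  then have "c = 1" using c[of 0] R by simp
  have xb: "x \<in> ball 0 R" using x by (simp add: R_def dist_norm)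
  have "S x * sqrt (QQ y x) = 1" using c[OF xb] \<open>c = 1\<close> by (simp add: H_def)
  then have "S x = 1 / sqrt (QQ y x)" using QQ_pos[of y x] by (simp add: field_simps)
  then show ?thesis using qq_summable[OF x] unfolding S_def by (metis summable_sums)
qed

lemma fact_le_fact_sq: "fact r \<le> (fact r :: real)^2"
proof -
  have "1 \<le> (fact r :: real)" by simp
  then show ?thesis by (simp add: power2_eq_square)
qed

lemma J0_summable: "summable (\<lambda>r. norm ((-1)^r * (b/2)^(2*r) / (fact r)^2 :: real))"
proof (rule summable_comparison_test[OF _ summable_exp[of "(b/2)^2"]])
  show "\<exists>N. \<forall>n\<ge>N. norm (norm ((-1)^n * (b/2)^(2*n) / (fact n)^2 :: real)) \<le> inverse (fact n) * ((b/2)^2)^n"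
  proof (intro exI allI impI)
    fix n :: nat
    have e: "norm (norm ((-1)^n * (b/2)^(2*n) / (fact n)^2 :: real)) = ((b/2)^2)^n / (fact n)^2"
      by (simp add: abs_mult power_mult)
    have "((b/2)^2)^n / (fact n)^2 \<le> ((b/2)^2)^n / fact n"
      using fact_le_fact_sq[of n] by (intro divide_left_mono) auto
    also have "\<dots> = inverse (fact n) * ((b/2)^2)^n" by (metis divide_inverse mult.commute)
    finally show "norm (norm ((-1)^n * (b/2)^(2*n) / (fact n)^2 :: real)) \<le> inverse (fact n) * ((b/2)^2)^n"
      unfolding e .
  qed
qed

lemma sinh_odd_sums: "(\<lambda>m. z^(2*m+1) / fact (2*m+1)) sums sinh (z::real)"
proof -
  define f where "f n = (if even n then 0 else z^n /\<^sub>R fact n)" for n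
  have "f sums sinh z" unfolding f_def by (rule sinh_converges)
  moreover have sm: "strict_mono (\<lambda>m::nat. 2*m+1)" by (rule strict_monoI) simp
  moreover have "f n = 0" if "n \<notin> range (\<lambda>m::nat. 2*m+1)" for n
  proof -
    have "even n"
    proof (rule ccontr)
      assume "odd n"
      then have "n = 2 * (n div 2) + 1" by presburger
      then show False using that by blast
    qed
    then show ?thesis by (simp add: f_def)
  qed
  ultimately have "(\<lambda>m. f (2*m+1)) sums sinh z" using sums_mono_reindex[of "\<lambda>m. 2*m+1" f] by blast
  moreover have "f (2*m+1) = z^(2*m+1) / fact (2*m+1)" for m
    by (simp add: f_def divide_inverse)
  ultimately show ?thesis by simp
qed

lemma sinh_odd_summable: "summable (\<lambda>m. norm (z^(2*m+1) / fact (2*m+1) :: real))"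
proof -
  have "(\<lambda>m. \<bar>z\<bar>^(2*m+1) / fact (2*m+1)) sums sinh \<bar>z\<bar>" by (rule sinh_odd_sums)
  moreover have "norm (z^(2*m+1) / fact (2*m+1) :: real) = \<bar>z\<bar>^(2*m+1) / fact (2*m+1)" for m
    by (simp add: power_abs abs_mult)
  ultimately show ?thesis by (simp add: sums_iff)
qed

lemma claimA: "(\<lambda>k. b^(2*k+1) * qq y (2*k+1) / fact (2*k+1)) sums (- (besselJ0 b * sinh (b*y)))"
proof -
  define A where "A r = (-1)^r * (b/2)^(2*r) / (fact r)^2" for r
  define B where "B m = (b*y)^(2*m+1) / fact (2*m+1)" for m
  have "(\<lambda>k. \<Sum>i\<le>k. A i * B (k - i)) sums ((\<Sum>k. A k) * (\<Sum>k. B k))"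
    by (rule Cauchy_product_sums) (use J0_summable sinh_odd_summable in \<open>simp_all add: A_def B_def\<close>)
  moreover have "(\<Sum>k. A k) = besselJ0 b" by (simp add: A_def besselJ0_def)
  moreover have "(\<Sum>k. B k) = sinh (b*y)" using sinh_odd_sums[of "b*y"] by (simp add: B_def sums_iff)
  moreover have "(\<Sum>i\<le>k. A i * B (k - i)) = - (b^(2*k+1) * qq y (2*k+1) / fact (2*k+1))" for k
  proof -
    have "qq y (2*k+1) = (\<Sum>r<Suc k. TT y (2*k+1) r)" by (rule qq_ext) simp
    also have "\<dots> = (\<Sum>r\<le>k. TT y (2*k+1) r)" by (simp add: lessThan_Suc_atMost)
    finally have q: "qq y (2*k+1) = (\<Sum>r\<le>k. TT y (2*k+1) r)" .
    have "A r * B (k - r) = - (b^(2*k+1) * TT y (2*k+1) r / fact (2*k+1))" if "r \<le> k" for r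
    proof -
      obtain j where k: "k = r + j" using \<open>r \<le> k\<close> le_Suc_ex by blast
      have e: "2*k+1 = 2*r + (2*j+1)" "k - r = j" using k by auto
      have T: "TT y (2*k+1) r = fact (2*k+1) / (fact (2*j+1) * 4^r * (fact r)^2) * (-1)^r * (- (y^(2*j+1)))"
      proof -
        have "TT y (2*k+1) r = fact (2*k+1) / (fact (2*j+1) * 4^r * (fact r)^2) * (-1)^r * (-y)^(2*j+1)"
          unfolding e(1) TT_eq ..
        moreover have "(-y)^(2*j+1) = - (y^(2*j+1))" by (rule power_minus_odd) simp
        ultimately show ?thesis by simp
      qed
      have bk: "b^(2*k+1) = b^(2*r) * b^(2*j+1)"
      proof -
        have "b^(2*k+1) = b^(2*r + (2*j+1))" by (simp only: e(1))
        then show ?thesis by (simp only: power_add)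
      qed
      have Ar: "A r = (-1)^r * (b^(2*r) / 4^r) / (fact r)^2"
      proof -
        have "(b/2)^(2*r) = b^(2*r) / 4^r" by (simp add: power_divide power_mult)
        then show ?thesis by (simp add: A_def)
      qed
      have Bj: "B (k - r) = (b^(2*j+1) * y^(2*j+1)) / fact (2*j+1)"
        by (simp only: B_def e(2) power_mult_distrib)
      have aux: "s * (B2/Q)/G * ((b1*y1)/F2) = - (B2*b1 * (F1/(F2*Q*G) * s * (- y1)) / F1)"
        if "F1 \<noteq> 0" "F2 \<noteq> 0" "Q \<noteq> 0" "G \<noteq> 0" for s B2 Q G b1 y1 F1 F2 :: real
        using that by (simp add: field_simps)
      show ?thesis unfolding Ar Bj T bk by (rule aux) auto
    qed
    then have "(\<Sum>i\<le>k. A i * B (k - i)) = (\<Sum>r\<le>k. - (b^(2*k+1) * TT y (2*k+1) r / fact (2*k+1)))"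
      by (intro sum.cong) auto
    also have "\<dots> = - (b^(2*k+1) * qq y (2*k+1) / fact (2*k+1))"
      unfolding q by (simp only: sum_negf sum_divide_distrib[symmetric] sum_distrib_left[symmetric])
    finally show ?thesis .
  qed
  ultimately have "(\<lambda>k. - (b^(2*k+1) * qq y (2*k+1) / fact (2*k+1))) sums (besselJ0 b * sinh (b*y))"
    by simp
  then have "(\<lambda>k. - (- (b^(2*k+1) * qq y (2*k+1) / fact (2*k+1)))) sums (- (besselJ0 b * sinh (b*y)))"
    by (rule sums_minus)
  then show ?thesis by simp
qed



lemma sincos_coeff_bound: "\<bar>a * cos_coeff n - b * sin_coeff n\<bar> \<le> 1 / fact n" if "\<bar>a\<bar> \<le> 1" "\<bar>b\<bar> \<le> 1"
proof (cases "even n")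
  case True
  then have "\<bar>a * cos_coeff n - b * sin_coeff n\<bar> = \<bar>a\<bar> / fact n" by (simp add: cos_coeff_def sin_coeff_def abs_mult)
  also have "\<dots> \<le> 1 / fact n" using that by (intro divide_right_mono) auto
  finally show ?thesis .
next
  case False
  then have "\<bar>a * cos_coeff n - b * sin_coeff n\<bar> = \<bar>b\<bar> / fact n" by (simp add: cos_coeff_def sin_coeff_def abs_mult)
  also have "\<dots> \<le> 1 / fact n" using that by (intro divide_right_mono) auto
  finally show ?thesis .
qed

definition cc :: "real \<Rightarrow> nat \<Rightarrow> real" where
  "cc y n = (LBINT t:{0<..}. besselK0 t * ((cos (y*t) * cos_coeff n - sin (y*t) * sin_coeff n) * t^n))"

lemma set_integral_mult_const:
  "(LBINT t:A. f t * c) = (LBINT t:A. f t) * (c::real)"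
  unfolding set_lebesgue_integral_def
  by (subst integral_mult_left_zero[symmetric]) (simp add: mult_ac)

lemma C_series:
  assumes d: "\<bar>d\<bar> < 1"
  shows "(\<lambda>n. cc y n * d^n) sums (pi / (2 * sqrt (1 + (y+d)^2)))"
proof -
  define h where "h n t = (cos (y*t) * cos_coeff n - sin (y*t) * sin_coeff n) * t^n * d^n" for n t
  have "(\<lambda>n. LBINT t:{0<..}. besselK0 t * h n t) sums (LBINT t:{0<..}. besselK0 t * cos ((y+d)*t))"
  proof (rule K0_series(2)[where b="\<lambda>n. \<bar>d\<bar>^n / fact n" and p="\<lambda>n. n"])
    show "h n \<in> borel_measurable borel" for n unfolding h_def by measurable
    show "0 \<le> \<bar>d\<bar>^n / fact n" for n by simp
    show "\<bar>h n t\<bar> \<le> \<bar>d\<bar>^n / fact n * t^n" if "t > 0" for n t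
    proof -
      have "\<bar>h n t\<bar> = \<bar>cos (y*t) * cos_coeff n - sin (y*t) * sin_coeff n\<bar> * (t^n * \<bar>d\<bar>^n)"
        using that by (simp add: h_def abs_mult power_abs)
      also have "\<dots> \<le> 1 / fact n * (t^n * \<bar>d\<bar>^n)"
        by (intro mult_right_mono sincos_coeff_bound) (use that in auto)
      finally show ?thesis by (simp add: mult_ac)
    qed
    show "summable (\<lambda>n. \<bar>d\<bar>^n / fact n * fact n)"
      using summable_geometric[of "\<bar>d\<bar>"] d by simp
    show "summable (\<lambda>n. \<bar>h n t\<bar>)" if "t > 0" for t
    proof (rule summable_comparison_test[OF _ summable_exp[of "\<bar>d\<bar> * t"]])
      show "\<exists>N. \<forall>n\<ge>N. norm \<bar>h n t\<bar> \<le> inverse (fact n) * (\<bar>d\<bar> * t)^n"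
      proof (intro exI allI impI)
        fix n :: nat
        have "\<bar>h n t\<bar> = \<bar>cos (y*t) * cos_coeff n - sin (y*t) * sin_coeff n\<bar> * (t^n * \<bar>d\<bar>^n)"
          using that by (simp add: h_def abs_mult power_abs)
        also have "\<dots> \<le> 1 / fact n * (t^n * \<bar>d\<bar>^n)"
          by (intro mult_right_mono sincos_coeff_bound) (use that in auto)
        finally show "norm \<bar>h n t\<bar> \<le> inverse (fact n) * (\<bar>d\<bar> * t)^n"
          by (simp add: power_mult_distrib divide_inverse mult_ac)
      qed
    qed
    show "(\<lambda>n. h n t) sums cos ((y+d)*t)" if "t > 0" for t
    proof -
      have c: "(\<lambda>n. cos_coeff n * (d*t)^n) sums cos (d*t)" using cos_converges[of "d*t"] by simp
      have s: "(\<lambda>n. sin_coeff n * (d*t)^n) sums sin (d*t)" using sin_converges[of "d*t"] by simp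
      have "(\<lambda>n. cos (y*t) * (cos_coeff n * (d*t)^n) - sin (y*t) * (sin_coeff n * (d*t)^n))
          sums (cos (y*t) * cos (d*t) - sin (y*t) * sin (d*t))"
        by (intro sums_diff sums_mult c s)
      moreover have "cos (y*t) * cos (d*t) - sin (y*t) * sin (d*t) = cos ((y+d)*t)"
        by (simp add: cos_add distrib_right)
      moreover have "cos (y*t) * (cos_coeff n * (d*t)^n) - sin (y*t) * (sin_coeff n * (d*t)^n) = h n t" for n
        by (simp add: h_def power_mult_distrib algebra_simps)
      ultimately show ?thesis by simp
    qed
  qed
  moreover have "(LBINT t:{0<..}. besselK0 t * h n t) = cc y n * d^n" for n
  proof -
    have "(LBINT t:{0<..}. besselK0 t * h n t)
        = (LBINT t:{0<..}. besselK0 t * ((cos (y*t) * cos_coeff n - sin (y*t) * sin_coeff n) * t^n) * d^n)"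
      by (simp add: h_def mult_ac)
    then show ?thesis by (simp add: set_integral_mult_const cc_def)
  qed
  moreover have "(LBINT t:{0<..}. besselK0 t * cos ((y+d)*t)) = pi / (2 * sqrt (1 + (y+d)^2))"
    by (rule C_closed)
  ultimately show ?thesis by simp
qed

lemma powser_unique0:
  fixes d :: "nat \<Rightarrow> real"
  assumes r: "r > 0" and s: "\<And>x. \<bar>x\<bar> < r \<Longrightarrow> (\<lambda>n. d n * x^n) sums 0"
  shows "d m = 0"
proof (induction m rule: less_induct)
  case (less m)
  have sm: "(\<lambda>n. d (n+m) * x^n) sums 0" if "x \<noteq> 0" "\<bar>x\<bar> < r" for x
  proof -
    have "(\<lambda>n. d (n+m) * x^(n+m)) sums 0"
      using sums_zero_iff_shift[of m "\<lambda>n. d n * x^n" 0] less s[OF that(2)] by simp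
    then have "(\<lambda>n. (d (n+m) * x^n) * x^m) sums 0" by (simp add: power_add mult_ac)
    then have "(\<lambda>n. (d (n+m) * x^n) * x^m / x^m) sums (0 / x^m)" by (rule sums_divide)
    then show ?thesis using that by simp
  qed
  have sm': "\<And>x::real. x \<noteq> 0 \<Longrightarrow> norm x < r \<Longrightarrow> (\<lambda>n. d (n+m) * x^n) sums (\<lambda>_::real. 0::real) x"
    using sm by simp
  have "((\<lambda>_::real. 0::real) \<longlongrightarrow> d (0+m)) (at (0::real))"
    using powser_limit_0_strong[OF r sm'] by simp
  then show ?case using LIM_unique[OF _ tendsto_const[of 0 "at (0::real)"]] by simp
qed

lemma cc_eq: "cc y n = pi / 2 * (1 / sqrt (1 + y^2)) * qq y n / (1 + y^2)^n"
proof -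
  define c where "c = 1 + y^2"
  have c: "c > 0" "c \<ge> 1" unfolding c_def by (auto simp: add_pos_nonneg)
  define r0 where "r0 = min 1 (c / (1 + \<bar>y\<bar>))"
  have r0: "r0 > 0" unfolding r0_def using c by (simp add: add_pos_nonneg)
  define D where "D n = cc y n - pi / 2 * (1 / sqrt c) * qq y n / c^n" for n
  have "(\<lambda>n. D n * x^n) sums 0" if x: "\<bar>x\<bar> < r0" for x
  proof -
    have x1: "\<bar>x\<bar> < 1" using x by (simp add: r0_def)
    have x2: "\<bar>x\<bar> < c / (1 + \<bar>y\<bar>)" using x by (simp add: r0_def)
    have x3: "\<bar>x / c\<bar> < 1 / (1 + \<bar>y\<bar>)"
      using x2 c by (simp add: abs_div field_simps add_pos_nonneg)
    have A: "(\<lambda>n. cc y n * x^n) sums (pi / (2 * sqrt (1 + (y+x)^2)))" by (rule C_series[OF x1])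
    have F: "(\<lambda>n. pi / 2 * (1 / sqrt c) * (qq y n * (x/c)^n)) sums (pi / 2 * (1 / sqrt c) * (1 / sqrt (QQ y (x/c))))"
      by (intro sums_mult qq_sums x3)
    have T: "(\<lambda>n. pi / 2 * (1 / sqrt c) * qq y n / c^n * x^n) = (\<lambda>n. pi / 2 * (1 / sqrt c) * (qq y n * (x/c)^n))"
      by (rule ext) (simp add: power_divide)
    have V: "pi / 2 * (1 / sqrt c) * (1 / sqrt (QQ y (x/c))) = pi / (2 * sqrt (1 + (y+x)^2))"
    proof -
      have q1: "QQ y (x/c) = (c + 2*y*x + x^2) / c"
      proof -
        have "QQ y (x/c) = 1 + 2*y*(x/c) + c*(x/c)^2" by (simp add: QQ_def c_def)
        also have "\<dots> = (c + 2*y*x + x^2) / c" using c by (simp add: field_simps power2_eq_square)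
        finally show ?thesis .
      qed
      have q2: "c + 2*y*x + x^2 = 1 + (y+x)^2" by (simp add: c_def power2_eq_square algebra_simps)
      have q: "QQ y (x/c) = (1 + (y+x)^2) / c" using q1 q2 by simp
      have p: "1 + (y+x)^2 > 0" by (simp add: add_pos_nonneg)
      show ?thesis unfolding q using c p by (simp add: real_sqrt_divide field_simps)
    qed
    have B: "(\<lambda>n. pi / 2 * (1 / sqrt c) * qq y n / c^n * x^n) sums (pi / (2 * sqrt (1 + (y+x)^2)))"
      unfolding T using F unfolding V .
    have "(\<lambda>n. cc y n * x^n - pi / 2 * (1 / sqrt c) * qq y n / c^n * x^n) sums 0"
      using sums_diff[OF A B] by simp
    then show ?thesis by (simp add: D_def algebra_simps)
  qed
  then have "D n = 0" by (intro powser_unique0[OF r0]) auto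
  then show ?thesis by (simp add: D_def c_def)
qed

lemma cc_odd: "cc y (2*k+1) = - ((-1)^k / fact (2*k+1)) * (LBINT t:{0<..}. besselK0 t * (t^(2*k+1) * sin (y*t)))"
proof -
  have "cc y (2*k+1) = (LBINT t:{0<..}. besselK0 t * (t^(2*k+1) * sin (y*t)) * (- ((-1)^k / fact (2*k+1))))"
    unfolding cc_def by (intro set_lebesgue_integral_cong allI impI) (auto simp: cos_coeff_def sin_coeff_def mult_ac)
  then show ?thesis by (simp only: set_integral_mult_const) (rule mult.commute)
qed

lemma aux2:
  fixes s B C F P q :: real
  assumes "s * s = 1" "F \<noteq> 0" "C \<noteq> 0"
  shows "s * (B*C) / F^2 * (- (s * F * (P * q / C))) = - P * (B * q / F)"
proof -
  have "s * (B*C) / F^2 * (- (s * F * (P * q / C))) = - (s * s) * (B * P * q) * (C / C) * (F / F^2)"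
    by (simp add: field_simps power2_eq_square)
  also have "\<dots> = - (B * P * q) / F" using assms by (simp add: power2_eq_square)
  finally show ?thesis by simp
qed

lemma bei_sums:
  assumes t: "t > 0"
  shows "(\<lambda>k. (-1)^k * (a^2*(1+y^2)/4)^(2*k+1) / (fact (2*k+1))^2 * t^(2*k+1)) sums kelvin_bei (a * sqrt ((1+y^2)*t))"
proof -
  define lam where "lam = a^2*(1+y^2)/4"
  define x where "x = a * sqrt ((1+y^2)*t)"
  have x2: "(x/2)^2 = lam * t"
    using t by (simp add: x_def lam_def power_divide power_mult_distrib add_pos_nonneg)
  have u: "(-1)^k * (x/2)^(4*k+2) / (fact (2*k+1))^2 = (-1)^k * lam^(2*k+1) / (fact (2*k+1))^2 * t^(2*k+1)" for k
  proof -
    have e: "4*k+2 = 2*(2*k+1)" by simp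
    have "(x/2)^(4*k+2) = ((x/2)^2)^(2*k+1)" by (simp only: e power_mult)
    then show ?thesis by (simp add: x2 power_mult_distrib)
  qed
  have sm: "summable (\<lambda>k. (-1)^k * lam^(2*k+1) / (fact (2*k+1))^2 * t^(2*k+1))"
  proof (rule summable_comparison_test[OF _ sinh_odd_summable[of "\<bar>lam\<bar> * t"]])
    show "\<exists>N. \<forall>n\<ge>N. norm ((-1)^n * lam^(2*n+1) / (fact (2*n+1))^2 * t^(2*n+1)) \<le> norm ((\<bar>lam\<bar> * t)^(2*n+1) / fact (2*n+1))"
    proof (intro exI allI impI)
      fix n :: nat
      have "norm ((-1)^n * lam^(2*n+1) / (fact (2*n+1))^2 * t^(2*n+1)) = (\<bar>lam\<bar> * t)^(2*n+1) / (fact (2*n+1))^2"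
        using t by (simp add: abs_mult power_abs power_mult_distrib)
      also have "\<dots> \<le> (\<bar>lam\<bar> * t)^(2*n+1) / fact (2*n+1)"
        using fact_le_fact_sq[of "2*n+1"] t by (intro divide_left_mono) auto
      also have "\<dots> = norm ((\<bar>lam\<bar> * t)^(2*n+1) / fact (2*n+1))" using t by simp
      finally show "norm ((-1)^n * lam^(2*n+1) / (fact (2*n+1))^2 * t^(2*n+1)) \<le> norm ((\<bar>lam\<bar> * t)^(2*n+1) / fact (2*n+1))" .
    qed
  qed
  have "kelvin_bei x = (\<Sum>k. (-1)^k * lam^(2*k+1) / (fact (2*k+1))^2 * t^(2*k+1))"
    unfolding kelvin_bei_def u ..
  then show ?thesis using sm unfolding lam_def[symmetric] x_def[symmetric] by (simp add: summable_sums)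
qed

theorem mainTheorem4:
  fixes a y :: real
  shows "set_integrable lborel {0<..}
           (\<lambda>t. besselK0 t * kelvin_bei (a * sqrt ((1 + y\<^sup>2) * t)) * sin (y * t))
       \<and> (LBINT t:{0<..}. besselK0 t * kelvin_bei (a * sqrt ((1 + y\<^sup>2) * t)) * sin (y * t))
           = pi / 2 * (1 / sqrt (1 + y\<^sup>2)) * besselJ0 (a\<^sup>2 / 4) * sinh (a\<^sup>2 * y / 4)"
proof -
  define lam where "lam = a^2*(1+y^2)/4"
  define beta where "beta = a^2/4"
  define g where "g = 1 / sqrt (1 + y^2)"
  define h where "h k t = (-1)^k * lam^(2*k+1) / (fact (2*k+1))^2 * t^(2*k+1) * sin (y*t)" for k t
  define H where "H t = kelvin_bei (a * sqrt ((1+y^2)*t)) * sin (y*t)" for t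
  define M where "M k = (LBINT t:{0<..}. besselK0 t * (t^(2*k+1) * sin (y*t)))" for k
  have c: "1 + y^2 > 0" by (simp add: add_pos_nonneg)
  have lb: "lam = beta * (1 + y^2)" by (simp add: lam_def beta_def)
  have hyps: "\<And>n. h n \<in> borel_measurable borel"
    "\<And>n. 0 \<le> \<bar>lam\<bar>^(2*n+1) / (fact (2*n+1))^2"
    "\<And>n t. t > 0 \<Longrightarrow> \<bar>h n t\<bar> \<le> \<bar>lam\<bar>^(2*n+1) / (fact (2*n+1))^2 * t^(2*n+1)"
    "summable (\<lambda>n. \<bar>lam\<bar>^(2*n+1) / (fact (2*n+1))^2 * fact (2*n+1))"
    "\<And>t. t > 0 \<Longrightarrow> summable (\<lambda>n. \<bar>h n t\<bar>)"
    "\<And>t. t > 0 \<Longrightarrow> (\<lambda>n. h n t) sums H t"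
  proof -
    show "h n \<in> borel_measurable borel" for n unfolding h_def by measurable
    show "0 \<le> \<bar>lam\<bar>^(2*n+1) / (fact (2*n+1))^2" for n by simp
    show hb: "\<bar>h n t\<bar> \<le> \<bar>lam\<bar>^(2*n+1) / (fact (2*n+1))^2 * t^(2*n+1)" if "t > 0" for n t
    proof -
      have "\<bar>h n t\<bar> = \<bar>lam\<bar>^(2*n+1) / (fact (2*n+1))^2 * t^(2*n+1) * \<bar>sin (y*t)\<bar>"
        using that by (simp add: h_def abs_mult power_abs)
      also have "\<dots> \<le> \<bar>lam\<bar>^(2*n+1) / (fact (2*n+1))^2 * t^(2*n+1) * 1"
        using that by (intro mult_left_mono) auto
      finally show ?thesis by simp
    qed
    have e: "\<bar>lam\<bar>^(2*n+1) / (fact (2*n+1))^2 * fact (2*n+1) = norm (\<bar>lam\<bar>^(2*n+1) / fact (2*n+1))" for n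
      by (simp add: power2_eq_square)
    show "summable (\<lambda>n. \<bar>lam\<bar>^(2*n+1) / (fact (2*n+1))^2 * fact (2*n+1))"
      unfolding e using sinh_odd_summable[of "\<bar>lam\<bar>"] by simp
    show "summable (\<lambda>n. \<bar>h n t\<bar>)" if t: "t > 0" for t
    proof (rule summable_comparison_test[OF _ sinh_odd_summable[of "\<bar>lam\<bar> * t"]])
      show "\<exists>N. \<forall>n\<ge>N. norm \<bar>h n t\<bar> \<le> norm ((\<bar>lam\<bar> * t)^(2*n+1) / fact (2*n+1))"
      proof (intro exI allI impI)
        fix n :: nat
        have "\<bar>h n t\<bar> \<le> \<bar>lam\<bar>^(2*n+1) / (fact (2*n+1))^2 * t^(2*n+1)" by (rule hb[OF t])
        also have "\<dots> = (\<bar>lam\<bar> * t)^(2*n+1) / (fact (2*n+1))^2" by (simp add: power_mult_distrib)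
        also have "\<dots> \<le> (\<bar>lam\<bar> * t)^(2*n+1) / fact (2*n+1)"
          using fact_le_fact_sq[of "2*n+1"] t by (intro divide_left_mono) auto
        also have "\<dots> = norm ((\<bar>lam\<bar> * t)^(2*n+1) / fact (2*n+1))" using t by simp
        finally show "norm \<bar>h n t\<bar> \<le> norm ((\<bar>lam\<bar> * t)^(2*n+1) / fact (2*n+1))" by simp
      qed
    qed
    show "(\<lambda>n. h n t) sums H t" if t: "t > 0" for t
    proof -
      have "(\<lambda>k. (-1)^k * lam^(2*k+1) / (fact (2*k+1))^2 * t^(2*k+1) * sin (y*t)) sums (kelvin_bei (a * sqrt ((1+y^2)*t)) * sin (y*t))"
        using sums_mult2[OF bei_sums[OF t, of a y]] unfolding lam_def .
      then show ?thesis unfolding h_def H_def .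
    qed
  qed
  note ser = K0_series[where p="\<lambda>n. 2*n+1", OF hyps]
  have termk: "(LBINT t:{0<..}. besselK0 t * h k t) = - (pi / 2 * g) * (beta^(2*k+1) * qq y (2*k+1) / fact (2*k+1))" for k
  proof -
    define F where "F = (fact (2*k+1) :: real)"
    define C where "C = (1 + y^2)^(2*k+1)"
    define s where "s = (-1::real)^k"
    have F0: "F \<noteq> 0" and C0: "C \<noteq> 0" and ss: "s * s = 1"
      using c by (auto simp: F_def C_def s_def power_mult_distrib[symmetric])
    have i1: "(LBINT t:{0<..}. besselK0 t * h k t) = s * lam^(2*k+1) / F^2 * M k"
    proof -
      have "(LBINT t:{0<..}. besselK0 t * h k t) = (LBINT t:{0<..}. besselK0 t * (t^(2*k+1) * sin (y*t)) * (s * lam^(2*k+1) / F^2))"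
        by (simp add: h_def s_def F_def mult_ac)
      then show ?thesis by (simp add: set_integral_mult_const M_def mult.commute)
    qed
    have mk: "M k = - (s * F * (pi / 2 * g * qq y (2*k+1) / C))"
    proof -
      have "- (s / F) * M k = pi / 2 * g * qq y (2*k+1) / C"
        using cc_odd[of y k] cc_eq[of y "2*k+1"] by (simp add: M_def s_def F_def C_def g_def)
      then have "s * F * (- (s / F) * M k) = s * F * (pi / 2 * g * qq y (2*k+1) / C)" by simp
      moreover have "s * F * (- (s / F) * M k) = - (s * s) * (F / F) * M k" by (simp add: field_simps)
      ultimately show ?thesis using ss F0 by simp
    qed
    have lamC: "lam^(2*k+1) = beta^(2*k+1) * C" by (simp add: lb C_def power_mult_distrib)
    show ?thesis unfolding i1 mk lamC
      using aux2[OF ss F0 C0, of "beta^(2*k+1)" "pi/2*g" "qq y (2*k+1)"] by (simp add: F_def mult_ac)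
  qed
  have v: "- (pi / 2 * g) * (- (besselJ0 beta * sinh (beta*y))) = pi / 2 * g * besselJ0 beta * sinh (beta*y)" by simp
  have "(\<lambda>k. - (pi / 2 * g) * (beta^(2*k+1) * qq y (2*k+1) / fact (2*k+1))) sums (- (pi / 2 * g) * (- (besselJ0 beta * sinh (beta*y))))"
    by (rule sums_mult[OF claimA])
  then have S: "(\<lambda>k. LBINT t:{0<..}. besselK0 t * h k t) sums (pi / 2 * g * besselJ0 beta * sinh (beta*y))"
    unfolding termk v .
  have eqf: "(\<lambda>t. besselK0 t * kelvin_bei (a * sqrt ((1 + y\<^sup>2) * t)) * sin (y * t)) = (\<lambda>t. besselK0 t * H t)"
    by (rule ext) (simp add: H_def mult_ac)
  show ?thesis unfolding eqf
  proof
    show "set_integrable lborel {0<..} (\<lambda>t. besselK0 t * H t)" by (rule ser(1))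
    have "(LBINT t:{0<..}. besselK0 t * H t) = pi / 2 * g * besselJ0 beta * sinh (beta*y)"
      using sums_unique2[OF ser(2) S] .
    then show "(LBINT t:{0<..}. besselK0 t * H t) = pi / 2 * (1 / sqrt (1 + y\<^sup>2)) * besselJ0 (a\<^sup>2 / 4) * sinh (a\<^sup>2 * y / 4)"
      by (simp add: g_def beta_def)
  qed
qed


end
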